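(* Let $H\subseteq F^7$ be the binary Hamming code of length 7 spanned by the vectors with supports $\{1,2,3\},\{1,4,5\},\{1,6,7\},\{2,4,6\}$. Let $\lambda_1:H\to\{0,1\}$ take the value $0$ exactly on $0^7$, $\{1,6,7\}$, $\{1,3,5,7\}$, $1^7$ (codewords given by supports) and $1$ on the other codewords, and let $\lambda_2:H\to\{0,1\}$ take the value $0$ exactly on $0^7$, $\{1,6,7\}$, $\{2,4,6\}$, $\{4,5,6,7\}$ and $1$ on the other codewords. Then the perfect codes $V22^1=V_H^{\lambda_1}$ and $V3^11=V_H^{\lambda_2}$ of length 15 are homogeneous, where $V_H^\lambda=\{(x+y,\ |x|+\lambda(y),\ x)\mid x\in F^7,\ y\in H\}$.
   Context: $|x|=x_1+\dots+x_7\pmod 2$. For a binary perfect code $C$ of length $m$ and a codeword $y\in C$, $STS(C,y)=\{\mathrm{supp}(x+y)\mid x\in C,\ d(x,y)=3\}$ (a Steiner triple system on $\{1,\dots,m\}$), where $d$ is Hamming distance. A perfect code $C$ containing $0^m$ is homogeneous if for every $y\in C$ there is a permutation $\pi\in S_m$ with $\pi(STS(C,y))=STS(C,0^m)$. *)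

theory Defs
  imports "HOL-Combinatorics.Permutations"
begin

text \<open>Binary vectors of length m are represented by their supports,
  i.e. subsets of {1..m}; vector addition over GF(2) is symmetric difference.\<close>

definition vecs :: "nat \<Rightarrow> nat set set" where
  "vecs m = Pow {1..m}"

definition vadd :: "nat set \<Rightarrow> nat set \<Rightarrow> nat set" where
  "vadd x y = (x - y) \<union> (y - x)"

definition hdist :: "nat set \<Rightarrow> nat set \<Rightarrow> nat" where
  "hdist x y = card (vadd x y)"

definition perfect_code :: "nat \<Rightarrow> nat set set \<Rightarrow> bool" where
  "perfect_code m C \<longleftrightarrow> C \<subseteq> vecs m \<and>
     (\<forall>v \<in> vecs m. \<exists>!c. c \<in> C \<and> hdist v c \<le> 1)"

definition STS :: "nat set set \<Rightarrow> nat set \<Rightarrow> nat set set" where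
  "STS C y = {vadd x y | x. x \<in> C \<and> hdist x y = 3}"

definition homogeneous :: "nat \<Rightarrow> nat set set \<Rightarrow> bool" where
  "homogeneous m C \<longleftrightarrow> perfect_code m C \<and> {} \<in> C \<and>
     (\<forall>y \<in> C. \<exists>\<pi>. \<pi> permutes {1..m} \<and> (\<lambda>T. \<pi> ` T) ` STS C y = STS C {})"

inductive_set span2 :: "nat set set \<Rightarrow> nat set set" for G where
  zero: "{} \<in> span2 G"
| add: "g \<in> G \<Longrightarrow> x \<in> span2 G \<Longrightarrow> vadd g x \<in> span2 G"

definition hamH :: "nat set set" where
  "hamH = span2 {{1,2,3}, {1,4,5}, {1,6,7}, {2,4,6}}"

definition lambda1 :: "nat set \<Rightarrow> nat" where
  "lambda1 y = (if y \<in> {{}, {1,6,7}, {1,3,5,7}, {1..7}} then 0 else 1)"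

definition lambda2 :: "nat set \<Rightarrow> nat" where
  "lambda2 y = (if y \<in> {{}, {1,6,7}, {2,4,6}, {4,5,6,7}} then 0 else 1)"

text \<open>Vasil'ev construction V_H^lambda = {(x+y, |x|+lambda(y), x)}: coordinates
  1..7 carry x+y, coordinate 8 the parity bit, coordinates 9..15 carry x.\<close>
definition vasiliev :: "(nat set \<Rightarrow> nat) \<Rightarrow> nat set set" where
  "vasiliev lam = {vadd x y \<union> (if odd (card x + lam y) then {8} else {}) \<union> (\<lambda>i. i + 8) ` x
                   | x y. x \<in> vecs 7 \<and> y \<in> hamH}"

end

theory Submission
  imports Defs
begin


lemma vadd_iff[simp]: "i \<in> vadd a b \<longleftrightarrow> (i \<in> a) \<noteq> (i \<in> b)" by (auto simp: vadd_def)
lemma vadd_comm: "vadd a b = vadd b a" by auto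
lemma vadd_assoc: "vadd (vadd a b) c = vadd a (vadd b c)" by auto
lemma vadd_self[simp]: "vadd a a = {}" by auto
lemma vadd_empty[simp]: "vadd a {} = a" "vadd {} a = a" by auto
lemma vadd_cancel[simp]: "vadd a (vadd a b) = b" "vadd (vadd b a) a = b" by auto
lemma vadd_subU: "vadd a b \<subseteq> a \<union> b" by auto
lemma vadd_fin[simp]: "finite a \<Longrightarrow> finite b \<Longrightarrow> finite (vadd a b)"
  using vadd_subU finite_subset by blast
lemma vadd_sub: "a \<subseteq> S \<Longrightarrow> b \<subseteq> S \<Longrightarrow> vadd a b \<subseteq> S" by auto
lemma card_vadd_le: "finite a \<Longrightarrow> finite b \<Longrightarrow> card (vadd a b) \<le> card a + card b"
proof -
  assume f: "finite a" "finite b"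
  have "card (vadd a b) \<le> card (a \<union> b)" using f by (intro card_mono) (auto simp: vadd_subU)
  also have "\<dots> \<le> card a + card b" by (rule card_Un_le)
  finally show ?thesis .
qed
lemma card_vadd_tri: "finite a \<Longrightarrow> finite b \<Longrightarrow> finite c \<Longrightarrow>
   card (vadd a c) \<le> card (vadd a b) + card (vadd b c)"
proof -
  assume f: "finite a" "finite b" "finite c"
  have "vadd a c = vadd (vadd a b) (vadd b c)" by auto
  then show ?thesis using card_vadd_le[of "vadd a b" "vadd b c"] f by simp
qed
lemma card_vadd_par: "finite a \<Longrightarrow> finite b \<Longrightarrow> card a + card b = card (vadd a b) + 2 * card (a \<inter> b)"
proof -
  assume f: "finite a" "finite b"
  have e1: "a = (a - b) \<union> (a \<inter> b)" by auto
  have 1: "card a = card (a - b) + card (a \<inter> b)"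
    using card_Un_disjoint[of "a - b" "a \<inter> b"] f e1 by auto
  have e2: "b = (b - a) \<union> (a \<inter> b)" by auto
  have 2: "card b = card (b - a) + card (a \<inter> b)"
    using card_Un_disjoint[of "b - a" "a \<inter> b"] f e2 by auto
  have e3: "vadd a b = (a - b) \<union> (b - a)" by auto
  have 3: "card (vadd a b) = card (a - b) + card (b - a)"
    using card_Un_disjoint[of "a - b" "b - a"] f e3 by auto
  show ?thesis using 1 2 3 by simp
qed
lemma perfect_count:
  assumes sub: "C \<subseteq> Pow {1..m}" and dist: "\<forall>a\<in>C. \<forall>b\<in>C. a \<noteq> b \<longrightarrow> 3 \<le> hdist a b"
   and cardC: "card C * (m+1) = 2^m"
  shows "perfect_code m C"
proof -
  define E where "E = insert {} ((\<lambda>i. {i}) ` {1..m})"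
  have cE: "card ((\<lambda>i. {i::nat}) ` {1..m}) = m" by (simp add: card_image)
  have cardE: "card E = m+1" unfolding E_def using cE by (subst card_insert_disjoint) auto
  have finE: "finite E" unfolding E_def by simp
  have Ele: "\<And>e. e \<in> E \<Longrightarrow> finite e \<and> card e \<le> 1" unfolding E_def by auto
  have finC: "finite C" using sub finite_subset by (metis finite_Pow_iff finite_atLeastAtMost)
  have finm: "\<And>c. c \<in> C \<Longrightarrow> finite c"
  proof -
    fix c assume "c \<in> C" then have "c \<subseteq> {1..m}" using sub by auto
    then show "finite c" using finite_subset by blast
  qed
  have inj: "inj_on (\<lambda>(c,e). vadd c e) (C \<times> E)"
  proof (rule inj_onI, clarify)
    fix c e c' e' assume h: "c \<in> C" "e \<in> E" "c' \<in> C" "e' \<in> E" "vadd c e = vadd c' e'"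
    have eq: "vadd c c' = vadd e e'"
    proof (rule set_eqI)
      fix i
      have "((i\<in>c) \<noteq> (i\<in>e)) = ((i\<in>c') \<noteq> (i\<in>e'))" using h(5) by (simp add: set_eq_iff)
      then show "i \<in> vadd c c' \<longleftrightarrow> i \<in> vadd e e'" by (cases "i\<in>c"; cases "i\<in>e"; cases "i\<in>c'"; simp)
    qed
    have "card (vadd e e') \<le> 2"
    proof -
      have a: "finite e \<and> card e \<le> 1" "finite e' \<and> card e' \<le> 1" using Ele h by auto
      then show ?thesis using card_vadd_le[of e e'] by linarith
    qed
    then have cc: "c = c'" using dist h eq unfolding hdist_def by fastforce
    then show "c = c' \<and> e = e'" using h(5) by (metis vadd_cancel(1))
  qed
  have imgs: "\<forall>c\<in>C. \<forall>e\<in>E. vadd c e \<in> Pow {1..m}"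
  proof (intro ballI)
    fix c e assume "c \<in> C" "e \<in> E"
    then have "c \<subseteq> {1..m}" "e \<subseteq> {1..m}" using sub unfolding E_def by auto
    then show "vadd c e \<in> Pow {1..m}" using vadd_sub by blast
  qed
  have img_sub: "(\<lambda>(c,e). vadd c e) ` (C \<times> E) \<subseteq> Pow {1..m}"
    using imgs by auto
  have "card ((\<lambda>(c,e). vadd c e) ` (C \<times> E)) = 2^m"
    using card_image[OF inj] cardC cardE by (simp add: card_cartesian_product)
  then have img_eq: "(\<lambda>(c,e). vadd c e) ` (C \<times> E) = Pow {1..m}"
    using img_sub by (intro card_subset_eq) (auto simp: card_Pow)
  show ?thesis unfolding perfect_code_def vecs_def
  proof (intro conjI ballI)
    show "C \<subseteq> Pow {1..m}" by (rule sub)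
    fix v assume "v \<in> Pow {1..m}"
    then have "v \<in> (\<lambda>(c,e). vadd c e) ` (C \<times> E)" using img_eq by simp
    then obtain c e where ce: "c \<in> C" "e \<in> E" "v = vadd c e" by blast
    have hv: "hdist v c \<le> 1" using ce Ele unfolding hdist_def by (simp add: vadd_comm)
    show "\<exists>!c. c \<in> C \<and> hdist v c \<le> 1"
    proof (rule ex1I[of _ c])
      show "c \<in> C \<and> hdist v c \<le> 1" using ce hv by simp
      fix c' assume c': "c' \<in> C \<and> hdist v c' \<le> 1"
      have fv: "finite v" using ce Ele finm by simp
      have "card (vadd c c') \<le> card (vadd c v) + card (vadd v c')"
        using card_vadd_tri fv finm ce c' by blast
      also have "\<dots> \<le> 2" using hv c' unfolding hdist_def by (simp add: vadd_comm)
      finally show "c' = c" using dist ce c' unfolding hdist_def by fastforce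
    qed
  qed
qed



definition Hl :: "nat set list" where "Hl = [{}, {1, 2, 3}, {1, 4, 5}, {1, 6, 7}, {2, 4, 6}, {2, 5, 7}, {3, 4, 7}, {3, 5, 6}, {1, 2, 4, 7}, {1, 2, 5, 6}, {1, 3, 4, 6}, {1, 3, 5, 7}, {2, 3, 4, 5}, {2, 3, 6, 7}, {4, 5, 6, 7}, {1, 2, 3, 4, 5, 6, 7}]"
definition Gl :: "nat set list" where "Gl = [{1,2,3}, {1,4,5}, {1,6,7}, {2,4,6}]"

fun combl :: "bool list \<Rightarrow> nat set list \<Rightarrow> nat set" where
  "combl (b#bs) (g#gs) = (if b then vadd g (combl bs gs) else combl bs gs)"
| "combl _ _ = {}"

lemma combl_span: "set gs \<subseteq> G \<Longrightarrow> combl bs gs \<in> span2 G"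
  by (induction bs gs rule: combl.induct) (auto intro: span2.intros)

lemma span2_closed: "x \<in> span2 G \<Longrightarrow> w \<in> span2 G \<Longrightarrow> vadd x w \<in> span2 G"
  by (induction rule: span2.induct) (auto simp: vadd_assoc intro: span2.add)

lemma Hl_closed: "\<forall>g\<in>set Gl. \<forall>h\<in>set Hl. vadd g h \<in> set Hl" by code_simp
lemma Hl_comb: "set Hl = set (map (\<lambda>bs. combl bs Gl) (List.n_lists 4 [True, False]))" by code_simp
lemma Hl_props: "\<forall>h\<in>set Hl. h \<subseteq> {1..7} \<and> (h \<noteq> {} \<longrightarrow> 3 \<le> card h)" by code_simp
lemma Hl_card: "card (set Hl) = 16" by code_simp

lemma hamH_eq: "hamH = set Hl"
proof
  have G: "hamH = span2 (set Gl)" unfolding hamH_def Gl_def by simp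
  show "hamH \<subseteq> set Hl"
  proof
    fix x assume "x \<in> hamH"
    then have "x \<in> span2 (set Gl)" using G by simp
    then show "x \<in> set Hl"
    proof (induction rule: span2.induct)
      case zero then show ?case by (simp add: Hl_def)
    next
      case (add g x) then show ?case using Hl_closed by blast
    qed
  qed
  show "set Hl \<subseteq> hamH" unfolding G Hl_comb using combl_span[of Gl "set Gl"] by auto
qed

lemma hamH_closed: "y \<in> hamH \<Longrightarrow> y' \<in> hamH \<Longrightarrow> vadd y y' \<in> hamH"
  unfolding hamH_def by (rule span2_closed)

lemma hamH_sub: "y \<in> hamH \<Longrightarrow> y \<subseteq> {1..7}" using Hl_props hamH_eq by auto
lemma hamH_wt: "y \<in> hamH \<Longrightarrow> y \<noteq> {} \<Longrightarrow> 3 \<le> card y" using Hl_props hamH_eq by auto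



definition sh :: "nat set \<Rightarrow> nat set" where "sh x = (\<lambda>i. i + 8) ` x"
definition par :: "(nat set \<Rightarrow> nat) \<Rightarrow> nat set \<Rightarrow> nat set \<Rightarrow> nat set" where
  "par lam x y = (if odd (card x + lam y) then {8} else {})"
definition word :: "(nat set \<Rightarrow> nat) \<Rightarrow> nat set \<Rightarrow> nat set \<Rightarrow> nat set" where
  "word lam x y = vadd x y \<union> par lam x y \<union> sh x"

lemma vas_eq: "vasiliev lam = {word lam x y | x y. x \<in> vecs 7 \<and> y \<in> hamH}"
  unfolding vasiliev_def word_def par_def sh_def by simp

lemma mem_sh: "i \<in> sh c \<longleftrightarrow> 8 \<le> i \<and> i - 8 \<in> c"
  unfolding sh_def by (auto simp: image_iff) (metis le_add_diff_inverse2)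

lemma Jmem: assumes "a \<subseteq> {1..7}" "b \<subseteq> {8}" "c \<subseteq> {1..7}"
  shows "i \<in> a \<union> b \<union> sh c \<longleftrightarrow> (i \<le> 7 \<and> i \<in> a) \<or> (i = 8 \<and> i \<in> b) \<or> (9 \<le> i \<and> i - 8 \<in> c)"
  using assms by (auto simp: mem_sh)

lemma vaddJ: assumes "a \<subseteq> {1..7}" "b \<subseteq> {8}" "c \<subseteq> {1..7}" "a' \<subseteq> {1..7}" "b' \<subseteq> {8}" "c' \<subseteq> {1..7}"
  shows "vadd (a \<union> b \<union> sh c) (a' \<union> b' \<union> sh c') = vadd a a' \<union> vadd b b' \<union> sh (vadd c c')"
proof (rule set_eqI)
  fix i
  have s: "vadd a a' \<subseteq> {1..7}" "vadd b b' \<subseteq> {8}" "vadd c c' \<subseteq> {1..7}" using assms by (simp_all add: vadd_sub)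
  show "i \<in> vadd (a \<union> b \<union> sh c) (a' \<union> b' \<union> sh c') \<longleftrightarrow> i \<in> vadd a a' \<union> vadd b b' \<union> sh (vadd c c')"
    unfolding vadd_iff[of i "a \<union> b \<union> sh c"] Jmem[OF assms(1-3)] Jmem[OF assms(4-6)] Jmem[OF s]
    by (cases "i \<le> 7"; cases "i = 8"; auto)
qed

lemma cardJ: assumes "a \<subseteq> {1..7}" "b \<subseteq> {8}" "c \<subseteq> {1..7}"
  shows "card (a \<union> b \<union> sh c) = card a + card b + card c"
proof -
  have f: "finite a" "finite b" "finite c" using assms finite_subset by blast+
  have d1: "a \<inter> b = {}" using assms by auto
  have d2: "(a \<union> b) \<inter> sh c = {}" using assms by (force simp: mem_sh subset_iff)
  have cs: "card (sh c) = card c" unfolding sh_def by (rule card_image) (auto simp: inj_on_def)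
  have "card (a \<union> b \<union> sh c) = card (a \<union> b) + card (sh c)"
    using f d2 by (intro card_Un_disjoint) (auto simp: sh_def)
  also have "card (a \<union> b) = card a + card b" using f d1 by (intro card_Un_disjoint) auto
  finally show ?thesis using cs by simp
qed

lemma subJ: assumes "a \<subseteq> {1..7}" "b \<subseteq> {8}" "c \<subseteq> {1..7}"
  shows "a \<union> b \<union> sh c \<subseteq> {1..15}"
  using assms by (force simp: mem_sh subset_iff)

lemma injJ: assumes "a \<subseteq> {1..7}" "b \<subseteq> {8}" "c \<subseteq> {1..7}" "a' \<subseteq> {1..7}" "b' \<subseteq> {8}" "c' \<subseteq> {1..7}"
  and eq: "a \<union> b \<union> sh c = a' \<union> b' \<union> sh c'"
  shows "a = a' \<and> b = b' \<and> c = c'"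
proof -
  have m: "\<And>i. (i \<le> 7 \<and> i \<in> a) \<or> (i = 8 \<and> i \<in> b) \<or> (9 \<le> i \<and> i - 8 \<in> c) \<longleftrightarrow>
     (i \<le> 7 \<and> i \<in> a') \<or> (i = 8 \<and> i \<in> b') \<or> (9 \<le> i \<and> i - 8 \<in> c')"
    using eq Jmem[OF assms(1-3)] Jmem[OF assms(4-6)] by blast
  have "a = a'"
  proof (rule set_eqI)
    fix i show "i \<in> a \<longleftrightarrow> i \<in> a'" using m[of i] assms by (cases "i \<le> 7") auto
  qed
  moreover have "b = b'"
  proof (rule set_eqI)
    fix i show "i \<in> b \<longleftrightarrow> i \<in> b'" using m[of i] assms by (cases "i = 8") auto
  qed
  moreover have "c = c'"
  proof (rule set_eqI)
    fix i show "i \<in> c \<longleftrightarrow> i \<in> c'" using m[of "i+8"] assms by (cases "1 \<le> i") auto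
  qed
  ultimately show ?thesis by simp
qed

lemma par_sub: "par lam x y \<subseteq> {8}" unfolding par_def by auto

lemma par_vadd: "8 \<in> vadd (par lam x y) (par lam x' y') \<longleftrightarrow> odd (card x + lam y) \<noteq> odd (card x' + lam y')"
  unfolding par_def by auto

lemma odd_vadd: "finite x \<Longrightarrow> finite u \<Longrightarrow> odd (card (vadd x u) + n) \<longleftrightarrow> odd (card x + card u + n)"
  using card_vadd_par[of x u] by presburger



lemma word_vadd: assumes "x \<subseteq> {1..7}" "y \<subseteq> {1..7}" "x' \<subseteq> {1..7}" "y' \<subseteq> {1..7}"
  shows "vadd (word lam x y) (word lam x' y') = vadd (vadd x y) (vadd x' y') \<union> vadd (par lam x y) (par lam x' y') \<union> sh (vadd x x')"
  unfolding word_def by (rule vaddJ) (intro vadd_sub par_sub assms)+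

lemma word_hdist: assumes "x \<subseteq> {1..7}" "y \<subseteq> {1..7}" "x' \<subseteq> {1..7}" "y' \<subseteq> {1..7}"
  shows "hdist (word lam x y) (word lam x' y') = card (vadd (vadd x y) (vadd x' y')) + card (vadd (par lam x y) (par lam x' y')) + card (vadd x x')"
  unfolding hdist_def word_vadd[OF assms] by (rule cardJ) (intro vadd_sub par_sub assms)+

lemma word_subU: "x \<subseteq> {1..7} \<Longrightarrow> y \<subseteq> {1..7} \<Longrightarrow> word lam x y \<subseteq> {1..15}"
  unfolding word_def by (rule subJ) (intro vadd_sub par_sub; assumption)+

lemma word_inj: assumes "x \<subseteq> {1..7}" "y \<subseteq> {1..7}" "x' \<subseteq> {1..7}" "y' \<subseteq> {1..7}"
  and "word lam x y = word lam x' y'" shows "x = x' \<and> y = y'"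
proof -
  have "vadd x y = vadd x' y' \<and> par lam x y = par lam x' y' \<and> x = x'"
    using assms(5) unfolding word_def by (rule injJ[rotated 6]) (intro vadd_sub par_sub assms)+
  then show ?thesis by (metis vadd_cancel(1))
qed

lemma fin7: "x \<subseteq> {1..7::nat} \<Longrightarrow> finite x" using finite_subset by blast

lemma V_dist: assumes x: "x \<subseteq> {1..7}" and x': "x' \<subseteq> {1..7}" and y: "y \<in> hamH" and y': "y' \<in> hamH"
  and ne: "word lam x y \<noteq> word lam x' y'"
  shows "3 \<le> hdist (word lam x y) (word lam x' y')"
proof -
  have ys: "y \<subseteq> {1..7}" "y' \<subseteq> {1..7}" using y y' hamH_sub by auto
  note hd = word_hdist[OF x ys(1) x' ys(2), of lam]
  show ?thesis
  proof (cases "y = y'")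
    case False
    have "vadd y y' \<in> hamH" using y y' hamH_closed by blast
    moreover have "vadd y y' \<noteq> {}" using False by (auto simp: set_eq_iff)
    ultimately have 3: "3 \<le> card (vadd y y')" using hamH_wt by blast
    have "vadd y y' = vadd (vadd (vadd x y) (vadd x' y')) (vadd x x')" by auto
    then have "card (vadd y y') \<le> card (vadd (vadd x y) (vadd x' y')) + card (vadd x x')"
      using card_vadd_le fin7 x x' ys vadd_sub by (metis vadd_fin)
    then show ?thesis using hd 3 by linarith
  next
    case True
    then have xne: "x \<noteq> x'" using ne by auto
    have A: "vadd (vadd x y) (vadd x' y') = vadd x x'" using True by auto
    have fx: "finite x" "finite x'" using x x' fin7 by auto
    have "vadd x x' \<noteq> {}" using xne by (auto simp: set_eq_iff)
    then have D1: "1 \<le> card (vadd x x')" using fx by (simp add: Suc_le_eq card_gt_0_iff)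
    show ?thesis
    proof (cases "card (vadd x x') = 1")
      case True
      have "odd (card x + lam y) \<noteq> odd (card x' + lam y')"
        using card_vadd_par[OF fx] True \<open>y = y'\<close> by presburger
      then have "8 \<in> vadd (par lam x y) (par lam x' y')" using par_vadd by blast
      moreover have "finite (vadd (par lam x y) (par lam x' y'))" by (simp add: par_def)
      ultimately have "card {8::nat} \<le> card (vadd (par lam x y) (par lam x' y'))"
        by (intro card_mono) auto
      then have "1 \<le> card (vadd (par lam x y) (par lam x' y'))" by simp
      then show ?thesis using True by (simp add: hd A)
    next
      case False
      then show ?thesis using D1 by (simp add: hd A)
    qed
  qed
qed

lemma V_img: "vasiliev lam = (\<lambda>(x,y). word lam x y) ` (Pow {1..7} \<times> hamH)"
  unfolding vas_eq vecs_def by auto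

lemma V_card: "card (vasiliev lam) = 2048"
proof -
  have "inj_on (\<lambda>(x,y). word lam x y) (Pow {1..7} \<times> hamH)"
  proof (rule inj_onI)
    fix p q assume h: "p \<in> Pow {1..7} \<times> hamH" "q \<in> Pow {1..7} \<times> hamH"
      "(\<lambda>(x,y). word lam x y) p = (\<lambda>(x,y). word lam x y) q"
    obtain x y where p: "p = (x,y)" by fastforce
    obtain x' y' where q: "q = (x',y')" by fastforce
    have "x \<subseteq> {1..7}" "x' \<subseteq> {1..7}" "y \<in> hamH" "y' \<in> hamH" "word lam x y = word lam x' y'"
      using h p q by auto
    then show "p = q" using word_inj[of x y x' y' lam] hamH_sub p q by auto
  qed
  then have "card (vasiliev lam) = card (Pow {1..7::nat} \<times> hamH)" unfolding V_img by (rule card_image)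
  also have "\<dots> = 128 * 16" using Hl_card hamH_eq by (simp add: card_cartesian_product card_Pow)
  finally show ?thesis by simp
qed

lemma V_perfect: "perfect_code 15 (vasiliev lam)"
proof (rule perfect_count)
  show "vasiliev lam \<subseteq> Pow {1..15}" unfolding V_img
  proof (rule subsetI)
    fix w assume "w \<in> (\<lambda>(x,y). word lam x y) ` (Pow {1..7} \<times> hamH)"
    then obtain x y where "w = word lam x y" "x \<subseteq> {1..7}" "y \<in> hamH" by auto
    then show "w \<in> Pow {1..15}" using word_subU[of x y lam] hamH_sub[of y] by simp
  qed
  show "card (vasiliev lam) * (15 + 1) = 2 ^ 15" using V_card by simp
  show "\<forall>a\<in>vasiliev lam. \<forall>b\<in>vasiliev lam. a \<noteq> b \<longrightarrow> 3 \<le> hdist a b"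
    unfolding V_img using V_dist by auto
qed



definition cw :: "(nat set \<Rightarrow> nat) \<Rightarrow> nat set \<Rightarrow> nat set" where "cw lam y = y \<union> (if odd (lam y) then {8} else {})"
definition dx :: "nat set \<Rightarrow> nat set" where "dx w = Set.filter (\<lambda>i. i+8 \<in> w) {1..7}"
definition dy :: "nat set \<Rightarrow> nat set" where "dy w = vadd (Set.filter (\<lambda>i. i \<in> w) {1..7}) (dx w)"
definition memV :: "(nat set \<Rightarrow> nat) \<Rightarrow> nat set \<Rightarrow> bool" where
 "memV lam w = (w \<subseteq> {1..15} \<and> dy w \<in> set Hl \<and> ((8 \<in> w) = odd (card (dx w) + lam (dy w))))"
definition pl :: "nat list \<Rightarrow> nat \<Rightarrow> nat" where "pl xs i = (if 1 \<le> i \<and> i \<le> length xs then xs ! (i - 1) else i)"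
definition chk :: "(nat set \<Rightarrow> nat) \<Rightarrow> nat set list \<Rightarrow> (nat set * nat list) list \<Rightarrow> bool" where
 "chk lam L P = (set (map fst P) = set Hl \<and> (\<forall>(y,p)\<in>set P. length p = 15 \<and> distinct p \<and> set p = {1..15} \<and>
    (\<forall>T\<in>set L. card (pl p ` T) = 3 \<and> memV lam (vadd (pl p ` T) (cw lam y)))))"
definition cov :: "nat set list \<Rightarrow> bool" where
 "cov L = (\<forall>i\<in>{1..15}. \<forall>j\<in>{1..15}. i \<noteq> j \<longrightarrow> (\<exists>T\<in>set L. i \<in> T \<and> j \<in> T))"
definition L1 :: "nat set list" where "L1 = [{1, 2, 11}, {1, 3, 10}, {1, 4, 13}, {1, 5, 12}, {1, 6, 7}, {1, 8, 9}, {1, 14, 15}, {2, 3, 9}, {2, 4, 14}, {2, 5, 15}, {2, 6, 12}, {2, 7, 13}, {2, 8, 10}, {3, 4, 15}, {3, 5, 14}, {3, 6, 13}, {3, 7, 12}, {3, 8, 11}, {4, 5, 9}, {4, 6, 10}, {4, 7, 11}, {4, 8, 12}, {5, 6, 11}, {5, 7, 10}, {5, 8, 13}, {6, 8, 14}, {6, 9, 15}, {7, 8, 15}, {7, 9, 14}, {9, 10, 11}, {9, 12, 13}, {10, 12, 14}, {10, 13, 15}, {11, 12, 15}, {11, 13, 14}]"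
definition P1 :: "(nat set * nat list) list" where "P1 = [({}, [1, 2, 3, 4, 5, 6, 7, 8, 9, 10, 11, 12, 13, 14, 15]), ({1, 2, 3}, [2, 1, 3, 5, 7, 12, 14, 8, 10, 9, 11, 13, 15, 4, 6]), ({1, 4, 5}, [2, 1, 11, 5, 15, 4, 6, 8, 10, 9, 3, 13, 7, 12, 14]), ({1, 6, 7}, [2, 1, 3, 5, 7, 4, 14, 8, 10, 9, 11, 13, 15, 12, 6]), ({2, 4, 6}, [2, 1, 11, 5, 15, 12, 6, 8, 10, 9, 3, 13, 7, 4, 14]), ({2, 5, 7}, [2, 1, 3, 5, 7, 12, 14, 8, 10, 9, 11, 13, 15, 4, 6]), ({3, 4, 7}, [2, 1, 11, 5, 15, 4, 6, 8, 10, 9, 3, 13, 7, 12, 14]), ({3, 5, 6}, [2, 1, 11, 5, 15, 12, 14, 8, 10, 9, 3, 13, 7, 4, 6]), ({1, 2, 4, 7}, [1, 2, 11, 4, 13, 6, 7, 8, 9, 10, 3, 12, 5, 14, 15]), ({1, 2, 5, 6}, [1, 2, 11, 4, 13, 14, 15, 8, 9, 10, 3, 12, 5, 6, 7]), ({1, 3, 4, 6}, [1, 2, 11, 4, 13, 14, 15, 8, 9, 10, 3, 12, 5, 6, 7]), ({1, 3, 5, 7}, [1, 2, 3, 4, 5, 14, 7, 8, 9, 10, 11, 12, 13, 6, 15]), ({2, 3, 4, 5}, [1, 2, 11, 4, 13, 14, 7, 8, 9, 10, 3, 12, 5, 6, 15]), ({2, 3, 6, 7}, [1, 2, 3, 4,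 5, 14, 15, 8, 9, 10, 11, 12, 13, 6, 7]), ({4, 5, 6, 7}, [1, 2, 3, 4, 5, 14, 15, 8, 9, 10, 11, 12, 13, 6, 7]), ({1, 2, 3, 4, 5, 6, 7}, [2, 1, 3, 5, 7, 4, 6, 8, 10, 9, 11, 13, 15, 12, 14])]"
definition L2 :: "nat set list" where "L2 = [{1, 2, 11}, {1, 3, 10}, {1, 4, 13}, {1, 5, 12}, {1, 6, 7}, {1, 8, 9}, {1, 14, 15}, {2, 3, 9}, {2, 4, 6}, {2, 5, 15}, {2, 7, 13}, {2, 8, 10}, {2, 12, 14}, {3, 4, 15}, {3, 5, 14}, {3, 6, 13}, {3, 7, 12}, {3, 8, 11}, {4, 5, 9}, {4, 7, 11}, {4, 8, 12}, {4, 10, 14}, {5, 6, 11}, {5, 7, 10}, {5, 8, 13}, {6, 8, 14}, {6, 9, 15}, {6, 10, 12}, {7, 8, 15}, {7, 9, 14}, {9, 10, 11}, {9, 12, 13}, {10, 13, 15}, {11, 12, 15}, {11, 13, 14}]"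
definition P2 :: "(nat set * nat list) list" where "P2 = [({}, [1, 2, 3, 4, 5, 6, 7, 8, 9, 10, 11, 12, 13, 14, 15]), ({1, 2, 3}, [4, 5, 9, 6, 10, 3, 7, 8, 12, 13, 1, 14, 2, 11, 15]), ({1, 4, 5}, [4, 5, 1, 6, 10, 3, 7, 8, 12, 13, 9, 14, 2, 11, 15]), ({1, 6, 7}, [4, 5, 9, 6, 2, 11, 7, 8, 12, 13, 1, 14, 10, 3, 15]), ({2, 4, 6}, [4, 5, 1, 6, 10, 11, 7, 8, 12, 13, 9, 14, 2, 3, 15]), ({2, 5, 7}, [4, 5, 9, 6, 2, 3, 7, 8, 12, 13, 1, 14, 10, 11, 15]), ({3, 4, 7}, [4, 5, 9, 6, 10, 11, 7, 8, 12, 13, 1, 14, 2, 3, 15]), ({3, 5, 6}, [4, 5, 9, 6, 10, 11, 7, 8, 12, 13, 1, 14, 2, 3, 15]), ({1, 2, 4, 7}, [1, 2, 11, 4, 13, 14, 7, 8, 9, 10, 3, 12, 5, 6, 15]), ({1, 2, 5, 6}, [1, 2, 11, 4, 5, 6, 7, 8, 9, 10, 3, 12, 13, 14, 15]), ({1, 3, 4, 6}, [1, 2, 3, 4, 13, 6, 7, 8, 9, 10, 11, 12, 5, 14, 15]), ({1, 3, 5, 7}, [1, 2, 11, 4, 13, 6, 7, 8, 9, 10, 3, 12, 5, 14, 15]), ({2, 3, 4, 5}, [1, 2, 11, 4, 13, 6, 7, 8, 9, 10, 3, 12, 5, 14, 15]), ({2, 3, 6, 7}, [1, 2, 3, 4,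 13, 6, 7, 8, 9, 10, 11, 12, 5, 14, 15]), ({4, 5, 6, 7}, [1, 2, 3, 4, 13, 14, 7, 8, 9, 10, 11, 12, 5, 6, 15]), ({1, 2, 3, 4, 5, 6, 7}, [4, 5, 9, 6, 10, 3, 7, 8, 12, 13, 1, 14, 2, 11, 15])]"

lemma par_trans: assumes lam0: "lam {} = 0" and fx: "finite x" "finite u"
  shows "vadd (par lam x y) (par lam u {}) = par lam (vadd x u) y"
  using odd_vadd[OF fx, of "lam y"] lam0 unfolding par_def by auto

lemma word_trans: assumes lam0: "lam {} = 0" and x: "x \<subseteq> {1..7}" and u: "u \<subseteq> {1..7}" and y: "y \<subseteq> {1..7}"
  shows "vadd (word lam x y) (word lam u {}) = word lam (vadd x u) y"
proof -
  have e: "{} \<subseteq> {1..7::nat}" by simp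
  have "vadd (word lam x y) (word lam u {}) = vadd (vadd x y) (vadd u {}) \<union> vadd (par lam x y) (par lam u {}) \<union> sh (vadd x u)"
    by (rule word_vadd[OF x y u e])
  also have "vadd (vadd x y) (vadd u {}) = vadd (vadd x u) y" by auto
  also have "vadd (par lam x y) (par lam u {}) = par lam (vadd x u) y"
    using par_trans[where lam=lam and x=x and u=u and y=y, OF lam0 fin7[OF x] fin7[OF u]] .
  finally show ?thesis unfolding word_def .
qed

lemma STS_mem: "T \<in> STS C c \<longleftrightarrow> (vadd T c \<in> C \<and> card T = 3)"
proof
  assume "T \<in> STS C c"
  then obtain x where "T = vadd x c" "x \<in> C" "card (vadd x c) = 3" by (auto simp: STS_def hdist_def)
  then show "vadd T c \<in> C \<and> card T = 3" by simp
next
  assume h: "vadd T c \<in> C \<and> card T = 3"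
  show "T \<in> STS C c" unfolding STS_def hdist_def using h by (intro CollectI exI[of _ "vadd T c"]) simp
qed

lemma STS_shift: assumes cl: "\<forall>w\<in>C. vadd w k \<in> C" shows "STS C (vadd c k) = STS C c"
proof (rule set_eqI)
  fix T
  have e1: "vadd (vadd T (vadd c k)) k = vadd T c" by auto
  have e2: "vadd (vadd T c) k = vadd T (vadd c k)" by auto
  show "T \<in> STS C (vadd c k) \<longleftrightarrow> T \<in> STS C c"
    unfolding STS_mem using cl e1 e2 by metis
qed

lemma cw_word: "word lam {} y = cw lam y" unfolding word_def par_def sh_def cw_def by simp

lemma STS_rep: assumes lam0: "lam {} = 0" and x: "x \<subseteq> {1..7}" and y: "y \<in> hamH"
  shows "STS (vasiliev lam) (word lam x y) = STS (vasiliev lam) (cw lam y)"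
proof -
  have ys: "y \<subseteq> {1..7}" using y hamH_sub by simp
  have e: "{} \<subseteq> {1..7::nat}" by simp
  have "word lam x y = vadd (word lam {} y) (word lam x {})"
    using word_trans[where lam=lam and x="{}" and u=x and y=y, OF lam0 e x ys] by simp
  moreover have "\<forall>w\<in>vasiliev lam. vadd w (word lam x {}) \<in> vasiliev lam"
  proof
    fix w assume "w \<in> vasiliev lam"
    then obtain x' y' where w: "w = word lam x' y'" "x' \<subseteq> {1..7}" "y' \<in> hamH" unfolding vas_eq vecs_def by blast
    have "vadd w (word lam x {}) = word lam (vadd x' x) y'"
      using w word_trans[where lam=lam and x=x' and u=x and y=y', OF lam0 w(2) x hamH_sub[OF w(3)]] by simp
    moreover have "vadd x' x \<subseteq> {1..7}" using w(2) x by (rule vadd_sub)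
    ultimately show "vadd w (word lam x {}) \<in> vasiliev lam" unfolding vas_eq vecs_def using w(3) by blast
  qed
  ultimately show ?thesis using STS_shift cw_word by metis
qed

lemma memV_in: assumes "memV lam w" shows "w \<in> vasiliev lam"
proof -
  have w: "w \<subseteq> {1..15}" "dy w \<in> hamH" "(8 \<in> w) = odd (card (dx w) + lam (dy w))"
    using assms hamH_eq unfolding memV_def by auto
  define x where "x = dx w"
  define y where "y = dy w"
  define F where "F = Set.filter (\<lambda>i. i \<in> w) {1..7::nat}"
  have xs: "x \<subseteq> {1..7}" unfolding x_def dx_def by auto
  have vxy: "vadd x y = F" unfolding y_def dy_def x_def F_def by auto
  have pr: "par lam x y = (if 8 \<in> w then {8} else {})" using w(3) unfolding par_def x_def y_def by simp
  have "w = word lam x y"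
  proof (rule set_eqI)
    fix i
    have "i \<in> word lam x y \<longleftrightarrow> (i \<le> 7 \<and> i \<in> F) \<or> (i = 8 \<and> i \<in> par lam x y) \<or> (9 \<le> i \<and> i - 8 \<in> x)"
      unfolding word_def vxy by (rule Jmem) (use xs vxy par_sub in \<open>auto simp: F_def\<close>)
    also have "\<dots> \<longleftrightarrow> i \<in> w" unfolding pr using w(1) unfolding F_def x_def dx_def
      by (cases "i \<le> 7"; cases "i = 8"; auto)
    finally show "i \<in> w \<longleftrightarrow> i \<in> word lam x y" by simp
  qed
  moreover have "y \<in> hamH" using w(2) y_def by simp
  ultimately show ?thesis unfolding vas_eq vecs_def using xs by blast
qed



lemma pl_perm: assumes len: "length p = 15" and d: "distinct p" and sp: "set p = {1..15}"
  shows "pl p permutes {1..15}"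
proof (rule bij_imp_permutes)
  have inj: "inj_on (pl p) {1..15}"
  proof (rule inj_onI)
    fix i j assume h: "i \<in> {1..15::nat}" "j \<in> {1..15::nat}" "pl p i = pl p j"
    then have "p ! (i - 1) = p ! (j - 1)" unfolding pl_def using len by simp
    then have "i - 1 = j - 1" using nth_eq_iff_index_eq[OF d] h len by auto
    then show "i = j" using h by auto
  qed
  have img: "pl p ` {1..15} = {1..15}"
  proof
    show "pl p ` {1..15} \<subseteq> {1..15}"
    proof
      fix k assume "k \<in> pl p ` {1..15}"
      then obtain i where i: "i \<in> {1..15::nat}" "k = pl p i" by blast
      then have "k = p ! (i - 1)" unfolding pl_def using len by simp
      then have "k \<in> set p" using i len by auto
      then show "k \<in> {1..15}" using sp by simp
    qed
    show "{1..15} \<subseteq> pl p ` {1..15}"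
    proof
      fix k assume "k \<in> {1..15::nat}"
      then have "k \<in> set p" using sp by simp
      then obtain j where j: "j < length p" "p ! j = k" by (auto simp: in_set_conv_nth)
      then have "pl p (j + 1) = k" unfolding pl_def by simp
      moreover have "j + 1 \<in> {1..15}" using j len by simp
      ultimately show "k \<in> pl p ` {1..15}" by (metis image_eqI)
    qed
  qed
  show "bij_betw (pl p) {1..15} {1..15}" using inj img by (simp add: bij_betw_def)
  show "\<And>x. x \<notin> {1..15} \<Longrightarrow> pl p x = x" unfolding pl_def using len by auto
qed

lemma STS_sub: assumes pc: "perfect_code m C" and c: "c \<in> C" and T: "T \<in> STS C c"
  shows "T \<subseteq> {1..m}" "card T = 3" "vadd T c \<in> C"
proof -
  have CV: "C \<subseteq> Pow {1..m}" using pc unfolding perfect_code_def vecs_def by auto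
  show w: "vadd T c \<in> C" "card T = 3" using T STS_mem by auto
  have a: "vadd T c \<subseteq> {1..m}" using CV w(1) by blast
  have b: "c \<subseteq> {1..m}" using CV c by blast
  have "vadd (vadd T c) c \<subseteq> {1..m}" using vadd_sub[OF a b] .
  then show "T \<subseteq> {1..m}" by simp
qed

lemma STS_uniq: assumes pc: "perfect_code m C" and c: "c \<in> C" and T: "T \<in> STS C c" and T': "T' \<in> STS C c"
  and ij: "i \<noteq> j" "i \<in> T" "j \<in> T" "i \<in> T'" "j \<in> T'"
  shows "T = T'"
proof -
  have CV: "C \<subseteq> Pow {1..m}" and U: "\<forall>v\<in>Pow {1..m}. \<exists>!c. c \<in> C \<and> hdist v c \<le> 1"
    using pc unfolding perfect_code_def vecs_def by auto
  note s = STS_sub[OF pc c T] and s' = STS_sub[OF pc c T']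
  have cs: "c \<subseteq> {1..m}" using CV c by auto
  have ijs: "{i,j} \<subseteq> {1..m}" using ij s(1) by blast
  have v: "vadd {i,j} c \<in> Pow {1..m}" using vadd_sub[OF ijs cs] by simp
  have d: "hdist (vadd {i,j} c) (vadd X c) \<le> 1" if X: "X \<subseteq> {1..m}" "card X = 3" "i \<in> X" "j \<in> X" for X
  proof -
    have "vadd (vadd {i,j} c) (vadd X c) = X - {i,j}" using X by auto
    moreover have "card (X - {i,j}) = card X - card {i,j}"
      using X by (intro card_Diff_subset) auto
    ultimately show ?thesis using X ij(1) unfolding hdist_def by simp
  qed
  have "vadd T c = vadd T' c"
    using U v s(3) s'(3) d[OF s(1) s(2) ij(2,3)] d[OF s'(1) s'(2) ij(4,5)] by blast
  then show ?thesis by (metis vadd_cancel(2))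
qed

lemma STS_cov: assumes pc: "perfect_code m C" and c: "c \<in> C" and sub: "M \<subseteq> STS C c"
  and cov: "\<forall>i\<in>{1..m}. \<forall>j\<in>{1..m}. i \<noteq> j \<longrightarrow> (\<exists>T\<in>M. i \<in> T \<and> j \<in> T)"
  shows "STS C c = M"
proof
  show "M \<subseteq> STS C c" by (rule sub)
  show "STS C c \<subseteq> M"
  proof
    fix T' assume T': "T' \<in> STS C c"
    note s = STS_sub[OF pc c T']
    obtain i j k where ijk: "T' = {i,j,k}" "i \<noteq> j" using s(2) card_3_iff by metis
    then have "i \<in> {1..m}" "j \<in> {1..m}" using s(1) by auto
    then obtain T where T: "T \<in> M" "i \<in> T" "j \<in> T" using cov ijk by blast
    have "T = T'" using STS_uniq[OF pc c _ T'] T sub ijk by blast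
    then show "T' \<in> M" using T by simp
  qed
qed

lemma per_y: assumes lam0: "lam {} = 0" and ck: "chk lam L P" and cv: "cov L" and y: "y \<in> hamH"
  shows "\<exists>\<sigma>. \<sigma> permutes {1..15} \<and> STS (vasiliev lam) (cw lam y) = (\<lambda>T. \<sigma> ` T) ` set L"
proof -
  have "y \<in> set (map fst P)" using ck y hamH_eq unfolding chk_def by simp
  then obtain p where yp: "(y,p) \<in> set P" by auto
  have all: "\<forall>(y,p)\<in>set P. length p = 15 \<and> distinct p \<and> set p = {1..15} \<and>
    (\<forall>T\<in>set L. card (pl p ` T) = 3 \<and> memV lam (vadd (pl p ` T) (cw lam y)))"
    using ck unfolding chk_def by simp
  then have pp: "length p = 15" "distinct p" "set p = {1..15}"
    and tri: "\<forall>T\<in>set L. card (pl p ` T) = 3 \<and> memV lam (vadd (pl p ` T) (cw lam y))"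
    using yp by auto
  define \<sigma> where "\<sigma> = pl p"
  have perm: "\<sigma> permutes {1..15}" using pl_perm pp \<sigma>_def by simp
  have cwC: "cw lam y \<in> vasiliev lam"
    unfolding cw_word[symmetric] vas_eq vecs_def using y by blast
  have sub: "(\<lambda>T. \<sigma> ` T) ` set L \<subseteq> STS (vasiliev lam) (cw lam y)"
  proof
    fix T' assume "T' \<in> (\<lambda>T. \<sigma> ` T) ` set L"
    then obtain T where T: "T \<in> set L" "T' = \<sigma> ` T" by blast
    then show "T' \<in> STS (vasiliev lam) (cw lam y)"
      unfolding STS_mem using tri memV_in \<sigma>_def by blast
  qed
  have covM: "\<forall>i\<in>{1..15}. \<forall>j\<in>{1..15}. i \<noteq> j \<longrightarrow> (\<exists>T\<in>(\<lambda>T. \<sigma> ` T) ` set L. i \<in> T \<and> j \<in> T)"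
  proof (intro ballI impI)
    fix i j :: nat assume h: "i \<in> {1..15}" "j \<in> {1..15}" "i \<noteq> j"
    have pi: "inv \<sigma> permutes {1..15}" using permutes_inv[OF perm] .
    have i': "inv \<sigma> i \<in> {1..15}" "inv \<sigma> j \<in> {1..15}" using h permutes_in_image[OF pi] by auto
    have ne: "inv \<sigma> i \<noteq> inv \<sigma> j" using h(3) permutes_inverses(1)[OF perm] by metis
    obtain T where T: "T \<in> set L" "inv \<sigma> i \<in> T" "inv \<sigma> j \<in> T" using cv i' ne unfolding cov_def by blast
    have "i \<in> \<sigma> ` T" "j \<in> \<sigma> ` T" using T permutes_inverses(1)[OF perm] by (metis image_eqI)+
    then show "\<exists>T\<in>(\<lambda>T. \<sigma> ` T) ` set L. i \<in> T \<and> j \<in> T" using T by blast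
  qed
  show ?thesis using STS_cov[OF V_perfect cwC sub covM] perm by blast
qed

lemma homog: assumes lam0: "lam {} = 0" and ck: "chk lam L P" and cv: "cov L"
  shows "homogeneous 15 (vasiliev lam)"
  unfolding homogeneous_def
proof (intro conjI ballI)
  show "perfect_code 15 (vasiliev lam)" by (rule V_perfect)
  have h0: "{} \<in> hamH" by (simp add: hamH_eq Hl_def)
  have e: "word lam {} {} = {}" using lam0 by (simp add: word_def par_def sh_def)
  have "word lam {} {} \<in> vasiliev lam" unfolding vas_eq vecs_def using h0 by blast
  then show z: "{} \<in> vasiliev lam" using e by simp
  fix c assume "c \<in> vasiliev lam"
  then obtain x y where c: "c = word lam x y" "x \<subseteq> {1..7}" "y \<in> hamH" unfolding vas_eq vecs_def by blast
  have Sc: "STS (vasiliev lam) c = STS (vasiliev lam) (cw lam y)" using STS_rep[where lam=lam and x=x and y=y, OF lam0 c(2,3)] c(1) by simp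
  have S0: "STS (vasiliev lam) {} = STS (vasiliev lam) (cw lam {})"
    using STS_rep[where lam=lam and x="{}" and y="{}", OF lam0 _ h0] e by simp
  obtain \<sigma>1 where s1: "\<sigma>1 permutes {1..15}" "STS (vasiliev lam) (cw lam y) = (\<lambda>T. \<sigma>1 ` T) ` set L"
    using per_y[OF lam0 ck cv c(3)] by blast
  obtain \<sigma>0 where s0: "\<sigma>0 permutes {1..15}" "STS (vasiliev lam) (cw lam {}) = (\<lambda>T. \<sigma>0 ` T) ` set L"
    using per_y[OF lam0 ck cv h0] by blast
  define \<pi> where "\<pi> = \<sigma>0 \<circ> inv \<sigma>1"
  have pp: "\<pi> permutes {1..15}" unfolding \<pi>_def by (intro permutes_compose permutes_inv s0(1) s1(1))
  have io: "inv \<sigma>1 \<circ> \<sigma>1 = id" using permutes_inv_o(2)[OF s1(1)] .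
  have im: "\<pi> ` (\<sigma>1 ` T) = \<sigma>0 ` T" for T
  proof -
    have "\<pi> ` (\<sigma>1 ` T) = (\<sigma>0 \<circ> (inv \<sigma>1 \<circ> \<sigma>1)) ` T" unfolding \<pi>_def by (simp add: image_comp o_assoc)
    then show ?thesis using io by simp
  qed
  have imc: "(\<lambda>T. \<pi> ` T) \<circ> (\<lambda>T. \<sigma>1 ` T) = (\<lambda>T. \<sigma>0 ` T)"
    by (rule ext) (simp only: o_apply im)
  have "(\<lambda>T. \<pi> ` T) ` STS (vasiliev lam) c = STS (vasiliev lam) {}"
    unfolding Sc S0 s1(2) s0(2) using image_comp[of "\<lambda>T. \<pi> ` T" "\<lambda>T. \<sigma>1 ` T" "set L"] imc by simp
  then show "\<exists>\<pi>. \<pi> permutes {1..15} \<and> (\<lambda>T. \<pi> ` T) ` STS (vasiliev lam) c = STS (vasiliev lam) {}"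
    using pp by blast
qed

theorem lemma3:
  shows "homogeneous 15 (vasiliev lambda1) \<and> homogeneous 15 (vasiliev lambda2)"
proof
  have c1: "chk lambda1 L1 P1" by code_simp
  have v1: "cov L1" by code_simp
  show "homogeneous 15 (vasiliev lambda1)" by (rule homog[OF _ c1 v1]) (simp add: lambda1_def)
  have c2: "chk lambda2 L2 P2" by code_simp
  have v2: "cov L2" by code_simp
  show "homogeneous 15 (vasiliev lambda2)" by (rule homog[OF _ c2 v2]) (simp add: lambda2_def)
qed

end
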